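(* Let $X$ be a compact metric space and $F\colon X\to 2^X$ a set-valued mapping. The set of $F$-invariant Borel probability measures whose support is all of $X$ is either empty or a dense $G_\delta$ subset of the space of $F$-invariant Borel probability measures on $X$ (with the weak$^*$ topology).
   Context: $2^X$ is the space of nonempty closed subsets of $X$; a set-valued mapping is an upper semicontinuous $F\colon X\to 2^X$; $F^{-1}(B)=\{y\in X: F(y)\cap B\neq\emptyset\}$ for $B\subset X$. A Borel probability measure $\mu$ on $X$ is $F$-invariant if $\mu(B)\le\mu(F^{-1}(B))$ for every Borel set $B\subset X$. The support of $\mu$ is all of $X$ (full support) if $\mu(U)>0$ for every nonempty open $U\subset X$. *)

theory Defs
  imports "HOL-Probability.Probability"
begin

text \<open>Set-valued mapping on X (the whole type): nonempty closed values, upper semicontinuous.\<close>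
definition set_valued_map :: "('a::topological_space \<Rightarrow> 'a set) \<Rightarrow> bool" where
  "set_valued_map F \<longleftrightarrow>
     (\<forall>x. F x \<noteq> {} \<and> closed (F x)) \<and>
     (\<forall>U. open U \<longrightarrow> open {x. F x \<subseteq> U})"

definition preimage_sv :: "('a \<Rightarrow> 'a set) \<Rightarrow> 'a set \<Rightarrow> 'a set" where
  "preimage_sv F B = {y. F y \<inter> B \<noteq> {}}"

definition borel_prob_measures :: "'a::topological_space measure set" where
  "borel_prob_measures = {M. sets M = sets borel \<and> prob_space M}"

text \<open>F^{-1}(B) need not be Borel (it is analytic, hence universally measurable);
  its measure is taken as the outer measure, i.e. the measure w.r.t. the completion.\<close>
definition F_invariant :: "('a::topological_space \<Rightarrow> 'a set) \<Rightarrow> 'a measure \<Rightarrow> bool" where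
  "F_invariant F M \<longleftrightarrow>
     (\<forall>B \<in> sets borel. emeasure M B \<le> outer_measure_of M (preimage_sv F B))"

definition invariant_measures :: "('a::topological_space \<Rightarrow> 'a set) \<Rightarrow> 'a measure set" where
  "invariant_measures F = {M \<in> borel_prob_measures. F_invariant F M}"

definition full_support :: "'a::topological_space measure \<Rightarrow> bool" where
  "full_support M \<longleftrightarrow> (\<forall>U. open U \<and> U \<noteq> {} \<longrightarrow> emeasure M U > 0)"

text \<open>Weak-* topology on Borel probability measures: the coarsest topology making
  all maps M \<mapsto> \<integral> f dM (f continuous real-valued; X compact, so bounded) continuous.\<close>
definition weak_star_topology :: "'a::topological_space measure topology" where
  "weak_star_topology = topology_generated_by
     {{M \<in> borel_prob_measures. (\<integral>x. f x \<partial>M) \<in> U} | f U.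
        continuous_on UNIV (f :: 'a \<Rightarrow> real) \<and> open U}"

end

theory Submission
  imports Defs
begin


definition mixm :: "real \<Rightarrow> 'a::topological_space measure \<Rightarrow> 'a measure \<Rightarrow> 'a measure" where
 "mixm t \<mu> \<nu> = measure_of UNIV (sets borel)
    (\<lambda>A. ennreal t * emeasure \<mu> A + ennreal (1-t) * emeasure \<nu> A)"

lemma sa_borel: "sigma_algebra UNIV (sets (borel::'a::topological_space measure))"
  using sets.sigma_algebra_axioms[of "borel::'a measure"] by simp

lemma sets_mixm[simp]: "sets (mixm t \<mu> \<nu>) = sets borel"
  unfolding mixm_def using sigma_algebra.sets_measure_of_eq[OF sa_borel] by blast

lemma space_mixm[simp]: "space (mixm t \<mu> \<nu>) = UNIV"
  unfolding mixm_def by (simp add: space_measure_of_conv)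

lemma emeasure_mixm:
  assumes "sets \<mu> = sets borel" "sets \<nu> = sets borel" "A \<in> sets borel"
  shows "emeasure (mixm t \<mu> \<nu>) A = ennreal t * emeasure \<mu> A + ennreal (1-t) * emeasure \<nu> A"
  unfolding mixm_def
proof (rule emeasure_measure_of_sigma[OF sa_borel _ _ assms(3)])
  show "positive (sets borel) (\<lambda>A. ennreal t * emeasure \<mu> A + ennreal (1 - t) * emeasure \<nu> A)"
    by (simp add: positive_def)
  show "countably_additive (sets borel) (\<lambda>A. ennreal t * emeasure \<mu> A + ennreal (1 - t) * emeasure \<nu> A)"
    unfolding countably_additive_def
  proof (intro allI impI)
    fix A :: "nat \<Rightarrow> 'a set" assume A: "range A \<subseteq> sets borel" "disjoint_family A"
    have "(\<Sum>i. ennreal t * emeasure \<mu> (A i) + ennreal (1 - t) * emeasure \<nu> (A i))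
       = ennreal t * (\<Sum>i. emeasure \<mu> (A i)) + ennreal (1 - t) * (\<Sum>i. emeasure \<nu> (A i))"
      by (simp only: suminf_add[OF summableI summableI, symmetric] ennreal_suminf_cmult)
    also have "\<dots> = ennreal t * emeasure \<mu> (\<Union>i. A i) + ennreal (1 - t) * emeasure \<nu> (\<Union>i. A i)"
      using A assms by (simp add: suminf_emeasure)
    finally show "(\<Sum>i. ennreal t * emeasure \<mu> (A i) + ennreal (1 - t) * emeasure \<nu> (A i)) =
         ennreal t * emeasure \<mu> (\<Union> (range A)) + ennreal (1 - t) * emeasure \<nu> (\<Union> (range A))" .
  qed
qed

lemma mixm_bpm:
  assumes "\<mu> \<in> borel_prob_measures" "\<nu> \<in> borel_prob_measures" "0 \<le> t" "t \<le> 1"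
  shows "mixm t \<mu> \<nu> \<in> borel_prob_measures"
proof -
  have s: "sets \<mu> = sets borel" "sets \<nu> = sets borel" "prob_space \<mu>" "prob_space \<nu>"
    using assms by (auto simp: borel_prob_measures_def)
  have sp: "space \<mu> = UNIV" "space \<nu> = UNIV"
    using sets_eq_imp_space_eq[OF s(1)] sets_eq_imp_space_eq[OF s(2)] by auto
  have "emeasure (mixm t \<mu> \<nu>) UNIV = ennreal t + ennreal (1-t)"
    using emeasure_mixm[OF s(1,2), of UNIV t] prob_space.emeasure_space_1[OF s(3)]
      prob_space.emeasure_space_1[OF s(4)] sp by simp
  also have "\<dots> = 1" using assms by (simp add: ennreal_plus[symmetric])
  finally show ?thesis unfolding borel_prob_measures_def
    by (auto intro!: prob_spaceI)
qed

lemma meas_borel_sets: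
  assumes "sets M = sets borel" "f \<in> borel_measurable borel"
  shows "f \<in> borel_measurable M"
  by (subst measurable_cong_sets[OF assms(1) refl]) (rule assms(2))

lemma nn_integral_mixm:
  assumes "sets \<mu> = sets borel" "sets \<nu> = sets borel"
    and f: "f \<in> borel_measurable borel"
  shows "(\<integral>\<^sup>+x. f x \<partial>mixm t \<mu> \<nu>) = ennreal t * (\<integral>\<^sup>+x. f x \<partial>\<mu>) + ennreal (1-t) * (\<integral>\<^sup>+x. f x \<partial>\<nu>)"
  using f
proof (induction rule: borel_measurable_induct)
  case (cong f g)
  have "f = g" using cong(3) by auto
  then show ?case using cong(4) by simp
next
  case (set A)
  have A: "A \<in> sets \<mu>" "A \<in> sets \<nu>" "A \<in> sets (mixm t \<mu> \<nu>)" using set assms by auto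
  show ?case by (simp only: nn_integral_indicator[OF A(1)] nn_integral_indicator[OF A(2)]
      nn_integral_indicator[OF A(3)] emeasure_mixm[OF assms(1,2) set])
next
  case (mult u c)
  have m: "u \<in> borel_measurable (mixm t \<mu> \<nu>)" "u \<in> borel_measurable \<mu>" "u \<in> borel_measurable \<nu>"
    using mult(2) assms by (auto intro: meas_borel_sets)
  have e: "\<And>M. u \<in> borel_measurable M \<Longrightarrow> (\<integral>\<^sup>+x. c * u x \<partial>M) = c * (\<integral>\<^sup>+x. u x \<partial>M)"
    by (rule nn_integral_cmult)
  show ?case unfolding e[OF m(1)] e[OF m(2)] e[OF m(3)] mult(4)
    by (simp only: distrib_left mult.left_commute)
next
  case (add u v)
  have m: "u \<in> borel_measurable (mixm t \<mu> \<nu>)" "u \<in> borel_measurable \<mu>" "u \<in> borel_measurable \<nu>"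
    "v \<in> borel_measurable (mixm t \<mu> \<nu>)" "v \<in> borel_measurable \<mu>" "v \<in> borel_measurable \<nu>"
    using add assms by (auto intro: meas_borel_sets)
  have e: "\<And>M. u \<in> borel_measurable M \<Longrightarrow> v \<in> borel_measurable M \<Longrightarrow> (\<integral>\<^sup>+x. v x + u x \<partial>M) = (\<integral>\<^sup>+x. v x \<partial>M) + (\<integral>\<^sup>+x. u x \<partial>M)"
    by (rule nn_integral_add) auto
  show ?case unfolding e[OF m(1) m(4)] e[OF m(2) m(5)] e[OF m(3) m(6)]
    using add by (simp only: distrib_left add_ac)
next
  case (seq U)
  have m: "\<And>i. U i \<in> borel_measurable (mixm t \<mu> \<nu>)" "\<And>i. U i \<in> borel_measurable \<mu>" "\<And>i. U i \<in> borel_measurable \<nu>"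
    using seq assms by (auto intro: meas_borel_sets)
  have incU: "incseq U" using seq by blast
  have inc: "\<And>M. incseq (\<lambda>i. \<integral>\<^sup>+x. U i x \<partial>M)"
    using incU by (auto simp: incseq_def le_fun_def intro!: nn_integral_mono)
  have inc2: "\<And>M c. incseq (\<lambda>i. c * (\<integral>\<^sup>+x. U i x \<partial>M))"
    using inc by (auto simp: incseq_def intro!: mult_left_mono)
  have IH: "\<And>i. (\<integral>\<^sup>+x. U i x \<partial>mixm t \<mu> \<nu>) = ennreal t * (\<integral>\<^sup>+x. U i x \<partial>\<mu>) + ennreal (1-t) * (\<integral>\<^sup>+x. U i x \<partial>\<nu>)"
    using seq by blast
  have "(\<integral>\<^sup>+x. (SUP i. U i) x \<partial>mixm t \<mu> \<nu>) = (SUP i. \<integral>\<^sup>+x. U i x \<partial>mixm t \<mu> \<nu>)"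
    unfolding SUP_apply by (rule nn_integral_monotone_convergence_SUP[OF incU m(1)])
  also have "\<dots> = (SUP i. ennreal t * (\<integral>\<^sup>+x. U i x \<partial>\<mu>) + ennreal (1-t) * (\<integral>\<^sup>+x. U i x \<partial>\<nu>))"
    by (simp only: IH)
  also have "\<dots> = (SUP i. ennreal t * (\<integral>\<^sup>+x. U i x \<partial>\<mu>)) + (SUP i. ennreal (1-t) * (\<integral>\<^sup>+x. U i x \<partial>\<nu>))"
    by (rule ennreal_SUP_add[OF inc2 inc2])
  also have "\<dots> = ennreal t * (SUP i. (\<integral>\<^sup>+x. U i x \<partial>\<mu>)) + ennreal (1-t) * (SUP i. (\<integral>\<^sup>+x. U i x \<partial>\<nu>))"
    by (simp only: SUP_mult_left_ennreal)
  also have "\<dots> = ennreal t * (\<integral>\<^sup>+x. (SUP i. U i) x \<partial>\<mu>) + ennreal (1-t) * (\<integral>\<^sup>+x. (SUP i. U i) x \<partial>\<nu>)"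
    unfolding SUP_apply nn_integral_monotone_convergence_SUP[OF incU m(2)]
                  nn_integral_monotone_convergence_SUP[OF incU m(3)] ..
  finally show ?case .
qed



lemma bpm_facts:
  assumes "M \<in> borel_prob_measures"
  shows "sets M = sets borel" "prob_space M" "space M = UNIV"
  using assms sets_eq_imp_space_eq[of M borel] by (auto simp: borel_prob_measures_def)

lemma cont_bounded:
  assumes "compact (UNIV::'a::metric_space set)" "continuous_on UNIV (f::'a \<Rightarrow> real)"
  obtains C where "\<And>x. \<bar>f x\<bar> \<le> C"
proof -
  have "bounded (f ` UNIV)" using compact_continuous_image[OF assms(2,1)] compact_imp_bounded by blast
  then obtain C where "\<forall>y\<in>f ` UNIV. norm y \<le> C" unfolding bounded_iff by blast
  then show ?thesis using that by auto
qed

lemma integral_shift: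
  assumes "M \<in> borel_prob_measures" "continuous_on UNIV (f::'a::metric_space \<Rightarrow> real)"
    and C: "\<And>x. \<bar>f x\<bar> \<le> C"
  shows "integrable M f"
    and "(\<integral>x. f x + C \<partial>M) = (\<integral>x. f x \<partial>M) + C"
    and "ennreal (\<integral>x. f x + C \<partial>M) = (\<integral>\<^sup>+x. ennreal (f x + C) \<partial>M)"
proof -
  note b = bpm_facts[OF assms(1)]
  interpret prob_space M by (rule b(2))
  have fm: "f \<in> borel_measurable M"
    by (rule meas_borel_sets[OF b(1) borel_measurable_continuous_onI[OF assms(2)]])
  show i: "integrable M f"
    by (rule integrable_const_bound[where B=C]) (use C fm in auto)
  have ic: "integrable M (\<lambda>x. C)" by simp
  show e: "(\<integral>x. f x + C \<partial>M) = (\<integral>x. f x \<partial>M) + C"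
    using Bochner_Integration.integral_add[OF i ic] prob_space by simp
  have ig: "integrable M (\<lambda>x. f x + C)" using i ic by simp
  have g0: "\<And>x. 0 \<le> f x + C" proof - fix x show "0 \<le> f x + C" using C[of x] unfolding abs_le_iff by linarith qed
  have nn: "AE x in M. 0 \<le> f x + C" using g0 by (auto intro!: AE_I2)
  show "ennreal (\<integral>x. f x + C \<partial>M) = (\<integral>\<^sup>+x. ennreal (f x + C) \<partial>M)"
    using nn_integral_eq_integral[OF ig nn] by simp
qed

lemma integral_mixm:
  assumes cpt: "compact (UNIV::'a::metric_space set)"
    and "\<mu> \<in> borel_prob_measures" "\<nu> \<in> borel_prob_measures" "0 \<le> t" "t \<le> 1"
    and fc: "continuous_on UNIV (f::'a \<Rightarrow> real)"
  shows "(\<integral>x. f x \<partial>mixm t \<mu> \<nu>) = t * (\<integral>x. f x \<partial>\<mu>) + (1-t) * (\<integral>x. f x \<partial>\<nu>)"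
proof -
  obtain C where C: "\<And>x. \<bar>f x\<bar> \<le> C" using cont_bounded[OF cpt fc] by blast
  have mb: "mixm t \<mu> \<nu> \<in> borel_prob_measures" by (rule mixm_bpm) (use assms in auto)
  note s1 = integral_shift[OF mb fc C] and s2 = integral_shift[OF assms(2) fc C]
    and s3 = integral_shift[OF assms(3) fc C]
  have gm: "(\<lambda>x. ennreal (f x + C)) \<in> borel_measurable borel"
    using borel_measurable_continuous_onI[OF fc] by measurable
  have g0: "\<And>x. 0 \<le> f x + C" proof - fix x show "0 \<le> f x + C" using C[of x] unfolding abs_le_iff by linarith qed
  have nn: "\<And>M. M \<in> borel_prob_measures \<Longrightarrow> 0 \<le> (\<integral>x. f x + C \<partial>M)"
    using g0 by (intro integral_nonneg_AE AE_I2) auto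
  have "ennreal (\<integral>x. f x + C \<partial>mixm t \<mu> \<nu>)
      = ennreal t * ennreal (\<integral>x. f x + C \<partial>\<mu>) + ennreal (1-t) * ennreal (\<integral>x. f x + C \<partial>\<nu>)"
    unfolding s1(3) s2(3) s3(3)
    by (rule nn_integral_mixm[OF bpm_facts(1)[OF assms(2)] bpm_facts(1)[OF assms(3)] gm])
  also have "\<dots> = ennreal (t * (\<integral>x. f x + C \<partial>\<mu>) + (1-t) * (\<integral>x. f x + C \<partial>\<nu>))"
    using assms nn[OF assms(2)] nn[OF assms(3)] by (simp add: ennreal_mult ennreal_plus)
  finally have "(\<integral>x. f x + C \<partial>mixm t \<mu> \<nu>) = t * (\<integral>x. f x + C \<partial>\<mu>) + (1-t) * (\<integral>x. f x + C \<partial>\<nu>)"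
    using nn[OF mb] nn[OF assms(2)] nn[OF assms(3)] assms(4,5) by (subst (asm) ennreal_inj) auto
  then show ?thesis unfolding s1(2) s2(2) s3(2) by (simp add: algebra_simps)
qed

lemma mixm_invariant:
  assumes "\<mu> \<in> invariant_measures F" "\<nu> \<in> invariant_measures F" "0 \<le> t" "t \<le> 1"
  shows "mixm t \<mu> \<nu> \<in> invariant_measures F"
proof -
  have b: "\<mu> \<in> borel_prob_measures" "\<nu> \<in> borel_prob_measures"
    and i: "F_invariant F \<mu>" "F_invariant F \<nu>"
    using assms by (auto simp: invariant_measures_def)
  note s = bpm_facts(1)[OF b(1)] bpm_facts(1)[OF b(2)]
  have "F_invariant F (mixm t \<mu> \<nu>)" unfolding F_invariant_def
  proof
    fix B :: "'a set" assume B: "B \<in> sets borel"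
    let ?P = "preimage_sv F B"
    have "emeasure (mixm t \<mu> \<nu>) B = ennreal t * emeasure \<mu> B + ennreal (1-t) * emeasure \<nu> B"
      by (rule emeasure_mixm[OF s B])
    also have "\<dots> \<le> ennreal t * outer_measure_of \<mu> ?P + ennreal (1-t) * outer_measure_of \<nu> ?P"
      using i B unfolding F_invariant_def by (intro add_mono mult_left_mono) auto
    also have "\<dots> \<le> outer_measure_of (mixm t \<mu> \<nu>) ?P"
      unfolding outer_measure_of_def[of "mixm t \<mu> \<nu>"]
    proof (rule INF_greatest)
      fix E assume E: "E \<in> {E \<in> sets (mixm t \<mu> \<nu>). ?P \<subseteq> E}"
      then have Eb: "E \<in> sets borel" and PE: "?P \<subseteq> E" by auto
      have "outer_measure_of \<mu> ?P \<le> emeasure \<mu> E" "outer_measure_of \<nu> ?P \<le> emeasure \<nu> E"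
        unfolding outer_measure_of_def using Eb PE s by (auto intro!: INF_lower)
      then show "ennreal t * outer_measure_of \<mu> ?P + ennreal (1-t) * outer_measure_of \<nu> ?P \<le> emeasure (mixm t \<mu> \<nu>) E"
        unfolding emeasure_mixm[OF s Eb] by (intro add_mono mult_left_mono) auto
    qed
    finally show "emeasure (mixm t \<mu> \<nu>) B \<le> outer_measure_of (mixm t \<mu> \<nu>) ?P" .
  qed
  then show ?thesis using mixm_bpm[OF b assms(3,4)] by (simp add: invariant_measures_def)
qed

lemma mixm_full_support:
  assumes "full_support \<mu>" "\<mu> \<in> borel_prob_measures" "\<nu> \<in> borel_prob_measures" "0 < t"
  shows "full_support (mixm t \<mu> \<nu>)"
  unfolding full_support_def
proof (intro allI impI)
  fix U :: "'a set" assume U: "open U \<and> U \<noteq> {}"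
  then have "emeasure \<mu> U > 0" using assms(1) by (auto simp: full_support_def)
  then have "0 < ennreal t * emeasure \<mu> U" using assms(4) by (simp add: ennreal_zero_less_mult_iff)
  also have "\<dots> \<le> ennreal t * emeasure \<mu> U + ennreal (1-t) * emeasure \<nu> U" by simp
  also have "\<dots> = emeasure (mixm t \<mu> \<nu>) U"
    using U by (intro emeasure_mixm[symmetric] bpm_facts(1) assms) auto
  finally show "0 < emeasure (mixm t \<mu> \<nu>) U" .
qed



definition WB :: "'a::topological_space measure set set" where
  "WB = {{M \<in> borel_prob_measures. (\<integral>x. f x \<partial>M) \<in> U} | f U.
        continuous_on UNIV (f :: 'a \<Rightarrow> real) \<and> open U}"

lemma ws_eq: "weak_star_topology = topology_generated_by WB"
  by (simp add: weak_star_topology_def WB_def)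

lemma WB_basis: "continuous_on UNIV (f :: 'a::topological_space \<Rightarrow> real) \<Longrightarrow> open U \<Longrightarrow>
   openin weak_star_topology {M \<in> borel_prob_measures. (\<integral>x. f x \<partial>M) \<in> U}"
  unfolding ws_eq openin_topology_generated_by_iff
  by (rule generate_topology_on.Basis) (auto simp: WB_def)

lemma topspace_ws: "topspace (weak_star_topology :: 'a::topological_space measure topology) = borel_prob_measures"
proof -
  have "borel_prob_measures \<in> (WB :: 'a measure set set)"
    unfolding WB_def by (rule CollectI, rule exI[of _ "\<lambda>x. 0"], rule exI[of _ UNIV]) auto
  moreover have "\<And>X. X \<in> (WB :: 'a measure set set) \<Longrightarrow> X \<subseteq> borel_prob_measures"
    unfolding WB_def by auto
  ultimately show ?thesis unfolding ws_eq topology_generated_by_topspace by blast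
qed

lemma arith_aux:
  fixes a b e t :: real
  assumes "e > 0" "0 < t" "t < min 1 (e / (\<bar>a - b\<bar> + 1))"
  shows "dist b (t * a + (1 - t) * b) < e"
proof -
  have c: "\<bar>a - b\<bar> + 1 > 0" by simp
  have "t < e / (\<bar>a - b\<bar> + 1)" using assms by simp
  then have "t * (\<bar>a - b\<bar> + 1) < e" using c by (simp add: less_divide_eq)
  then have "t * \<bar>a - b\<bar> < e" using assms(2) by (simp add: distrib_left)
  moreover have "dist b (t * a + (1 - t) * b) = t * \<bar>a - b\<bar>"
  proof -
    have "b - (t * a + (1 - t) * b) = - (t * (a - b))" by (simp add: algebra_simps)
    then have "dist b (t * a + (1 - t) * b) = \<bar>t * (a - b)\<bar>" by (simp only: dist_real_def abs_minus_cancel)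
    then show ?thesis using assms(2) by (simp add: abs_mult)
  qed
  ultimately show ?thesis by simp
qed

lemma density_key:
  assumes cpt: "compact (UNIV::'a::metric_space set)"
    and mu: "\<mu> \<in> borel_prob_measures" and nu: "\<nu> \<in> borel_prob_measures"
    and g: "generate_topology_on (WB :: 'a measure set set) V"
  shows "\<nu> \<in> V \<Longrightarrow> \<exists>d>0. \<forall>t. 0 < t \<and> t < d \<longrightarrow> mixm t \<mu> \<nu> \<in> V"
  using g
proof (induction rule: generate_topology_on.induct)
  case Empty
  then show ?case by simp
next
  case (Int a b)
  then obtain d1 d2 where "d1 > 0" "\<forall>t. 0 < t \<and> t < d1 \<longrightarrow> mixm t \<mu> \<nu> \<in> a"
    "d2 > 0" "\<forall>t. 0 < t \<and> t < d2 \<longrightarrow> mixm t \<mu> \<nu> \<in> b" by auto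
  then show ?case by (intro exI[of _ "min d1 d2"]) auto
next
  case (UN K)
  then obtain k where "k \<in> K" "\<nu> \<in> k" by auto
  with UN obtain d where "d > 0" "\<forall>t. 0 < t \<and> t < d \<longrightarrow> mixm t \<mu> \<nu> \<in> k" by blast
  with \<open>k \<in> K\<close> show ?case by blast
next
  case (Basis s)
  then obtain f U where fU: "continuous_on UNIV (f::'a\<Rightarrow>real)" "open U"
    and s: "s = {M \<in> borel_prob_measures. (\<integral>x. f x \<partial>M) \<in> U}"
    unfolding WB_def by blast
  define a where "a = (\<integral>x. f x \<partial>\<mu>)"
  define b where "b = (\<integral>x. f x \<partial>\<nu>)"
  have "b \<in> U" using Basis s by (auto simp: b_def)
  then obtain e where e: "e > 0" "ball b e \<subseteq> U" using fU(2) open_contains_ball by blast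
  define d where "d = min 1 (e / (\<bar>a - b\<bar> + 1))"
  have d: "d > 0" using e by (simp add: d_def)
  show ?case
  proof (intro exI[of _ d] conjI allI impI d)
    fix t assume t: "0 < t \<and> t < d"
    then have t1: "t \<le> 1" by (simp add: d_def)
    have mb: "mixm t \<mu> \<nu> \<in> borel_prob_measures" by (rule mixm_bpm) (use mu nu t t1 in auto)
    have I: "(\<integral>x. f x \<partial>mixm t \<mu> \<nu>) = t * a + (1-t) * b"
      unfolding a_def b_def by (rule integral_mixm[OF cpt mu nu _ t1 fU(1)]) (use t in auto)
    have "dist b (t * a + (1-t) * b) < e"
      using arith_aux[OF e(1), of t a b] t by (simp add: d_def)
    then have "(\<integral>x. f x \<partial>mixm t \<mu> \<nu>) \<in> U" using e(2) I by auto
    then show "mixm t \<mu> \<nu> \<in> s" using s mb by auto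
  qed
qed

lemma open_pos:
  fixes U :: "'a::metric_space set"
  assumes "open U"
  shows "openin weak_star_topology {M \<in> borel_prob_measures. emeasure M U > 0}"
proof (cases "U = UNIV")
  case True
  have "{M \<in> borel_prob_measures. emeasure M U > 0} = borel_prob_measures"
  proof (intro equalityI subsetI)
    fix M :: "'a measure" assume M: "M \<in> borel_prob_measures"
    then have "emeasure M UNIV = 1"
      using prob_space.emeasure_space_1[OF bpm_facts(2)[OF M]] bpm_facts(3)[OF M] by simp
    then show "M \<in> {M \<in> borel_prob_measures. emeasure M U > 0}" using M True by simp
  qed auto
  then show ?thesis using topspace_ws by (metis openin_topspace)
next
  case False
  define K where "K = - U"
  have K: "closed K" "K \<noteq> {}" using assms False by (auto simp: K_def)
  define f :: "nat \<Rightarrow> 'a \<Rightarrow> real" where "f k x = min 1 (real (Suc k) * infdist x K)" for k x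
  have fc: "continuous_on UNIV (f k)" for k
    unfolding f_def by (intro continuous_intros)
  have f01: "\<bar>f k x\<bar> \<le> 1" for k x
    unfolding f_def using infdist_nonneg[of x K] by auto
  have fU: "f k x \<le> indicator U x" for k x
  proof (cases "x \<in> U")
    case True then show ?thesis unfolding f_def by simp
  next
    case False then have "x \<in> K" by (simp add: K_def)
    then show ?thesis using False unfolding f_def by (simp add: infdist_zero)
  qed
  have eq: "{M \<in> borel_prob_measures. emeasure M U > 0} =
      (\<Union>k. {M \<in> borel_prob_measures. (\<integral>x. f k x \<partial>M) \<in> {0<..}})"
  proof (intro equalityI subsetI)
    fix M assume M: "M \<in> {M \<in> borel_prob_measures. emeasure M U > 0}"
    then have Mb: "M \<in> borel_prob_measures" and pos: "emeasure M U > 0" by auto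
    note b = bpm_facts[OF Mb]
    interpret prob_space M by (rule b(2))
    define A where "A k = {x. 1 / real (Suc k) < infdist x K}" for k
    have Aopen: "open (A k)" for k unfolding A_def
      by (intro open_Collect_less continuous_intros)
    have Asets: "A k \<in> sets M" for k using Aopen b(1) by auto
    have UA: "U = (\<Union>k. A k)"
    proof (intro equalityI subsetI)
      fix x assume "x \<in> U"
      then have "infdist x K > 0" using K by (intro infdist_pos_not_in_closed) (auto simp: K_def)
      then obtain k where "inverse (real (Suc k)) < infdist x K" using reals_Archimedean by blast
      then show "x \<in> (\<Union>k. A k)" by (auto simp: A_def field_simps)
    next
      fix x assume "x \<in> (\<Union>k. A k)"
      then obtain k where "1 / real (Suc k) < infdist x K" by (auto simp: A_def)
      then have "infdist x K \<noteq> 0" by (metis not_less of_nat_0_le_iff div_0 divide_nonneg_nonneg zero_le_one order_less_le)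
      then show "x \<in> U" by (metis ComplI K_def infdist_zero)
    qed
    obtain k where k: "emeasure M (A k) > 0"
    proof (rule ccontr)
      assume "\<not> ?thesis"
      then have "\<forall>k. emeasure M (A k) = 0" using that by (metis not_gr_zero)
      then have "emeasure M (\<Union>k. A k) = 0" using Asets by (intro emeasure_UN_eq_0) auto
      then show False using pos UA by simp
    qed
    have le: "indicator (A k) x \<le> f k x" for x
    proof (cases "x \<in> A k")
      case True
      then have "1 < real (Suc k) * infdist x K" by (simp add: A_def field_simps)
      then show ?thesis using True by (simp add: f_def)
    next
      case False
      then show ?thesis unfolding f_def using infdist_nonneg[of x K] by simp
    qed
    have "0 < measure M (A k)" using k by (simp add: emeasure_eq_measure)
    also have "\<dots> = (\<integral>x. indicator (A k) x \<partial>M)" using b(3) by simp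
    also have "\<dots> \<le> (\<integral>x. f k x \<partial>M)"
      by (intro integral_mono le integral_shift(1)[OF Mb fc f01]) (use Asets in \<open>auto intro!: integrable_real_indicator simp: less_top[symmetric] emeasure_finite\<close>)
    finally show "M \<in> (\<Union>k. {M \<in> borel_prob_measures. (\<integral>x. f k x \<partial>M) \<in> {0<..}})" using Mb by auto
  next
    fix M assume "M \<in> (\<Union>k. {M \<in> borel_prob_measures. (\<integral>x. f k x \<partial>M) \<in> {0<..}})"
    then obtain k where Mb: "M \<in> borel_prob_measures" and pos: "0 < (\<integral>x. f k x \<partial>M)" by auto
    note b = bpm_facts[OF Mb]
    interpret prob_space M by (rule b(2))
    have Us: "U \<in> sets M" using assms b(1) by auto
    have "(\<integral>x. f k x \<partial>M) \<le> (\<integral>x. indicator U x \<partial>M)"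
      by (intro integral_mono fU integral_shift(1)[OF Mb fc f01]) (use Us in \<open>auto intro!: integrable_real_indicator simp: less_top[symmetric] emeasure_finite\<close>)
    also have "\<dots> = measure M U" using b(3) by simp
    finally have "0 < measure M U" using pos by linarith
    then show "M \<in> {M \<in> borel_prob_measures. emeasure M U > 0}" using Mb by (simp add: emeasure_eq_measure)
  qed
  have o: "\<And>k. openin weak_star_topology {M \<in> borel_prob_measures. (\<integral>x. f k x \<partial>M) \<in> {0<..}}"
    by (rule WB_basis[OF fc]) simp
  show ?thesis unfolding eq
    by (rule openin_Union) (use o in blast)
qed



lemma finite_nets:
  assumes "compact (UNIV::'a::metric_space set)"
  obtains C :: "nat \<Rightarrow> 'a::metric_space set" where "\<And>n. finite (C n)"
    "\<And>n x. \<exists>c\<in>C n. x \<in> ball c (1 / real (Suc n))"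
proof -
  have "\<forall>n. \<exists>D. finite D \<and> (UNIV::'a set) \<subseteq> \<Union>((\<lambda>c. ball c (1 / real (Suc n))) ` D)"
  proof
    fix n
    obtain D where "D \<subseteq> UNIV" "finite D" "(UNIV::'a set) \<subseteq> \<Union>((\<lambda>c. ball c (1 / real (Suc n))) ` D)"
      by (rule compactE_image[OF assms, of UNIV "\<lambda>c. ball c (1 / real (Suc n))"]) auto
    then show "\<exists>D. finite D \<and> (UNIV::'a set) \<subseteq> \<Union>((\<lambda>c. ball c (1 / real (Suc n))) ` D)" by blast
  qed
  then obtain C where "\<And>n. finite (C n) \<and> (UNIV::'a set) \<subseteq> \<Union>((\<lambda>c. ball c (1 / real (Suc n))) ` C n)"
    by metis
  then show ?thesis using that by blast
qed

theorem theorem13: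
  fixes F :: "'a::metric_space \<Rightarrow> 'a set"
  assumes "compact (UNIV :: 'a set)"
    and "set_valued_map F"
  defines "T \<equiv> subtopology weak_star_topology (invariant_measures F)"
  defines "S \<equiv> {M \<in> invariant_measures F. full_support M}"
  shows "S = {} \<or> (gdelta_in T S \<and> T closure_of S = topspace T)"
proof (cases "S = {}")
  case True then show ?thesis by simp
next
  case False
  then obtain \<mu> where mu: "\<mu> \<in> S" by blast
  have invb: "invariant_measures F \<subseteq> borel_prob_measures" by (auto simp: invariant_measures_def)
  have tT: "topspace T = invariant_measures F"
    unfolding T_def topspace_subtopology topspace_ws using invb by blast
  have muinv: "\<mu> \<in> invariant_measures F" and mufs: "full_support \<mu>" using mu by (auto simp: S_def)
  have mub: "\<mu> \<in> borel_prob_measures" using muinv invb by blast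
  have cl: "T closure_of S = topspace T"
  proof (intro equalityI closure_of_subset_topspace subsetI)
    fix \<nu> assume nu: "\<nu> \<in> topspace T"
    then have nuinv: "\<nu> \<in> invariant_measures F" using tT by simp
    then have nub: "\<nu> \<in> borel_prob_measures" using invb by blast
    show "\<nu> \<in> T closure_of S" unfolding in_closure_of
    proof (intro conjI allI impI nu)
      fix W assume W: "\<nu> \<in> W \<and> openin T W"
      then obtain V where V: "openin weak_star_topology V" "W = V \<inter> invariant_measures F"
        unfolding T_def openin_subtopology by blast
      have g: "generate_topology_on WB V" using V(1) unfolding ws_eq openin_topology_generated_by_iff .
      obtain d where d: "d > 0" "\<forall>t. 0 < t \<and> t < d \<longrightarrow> mixm t \<mu> \<nu> \<in> V"
        using density_key[OF assms(1) mub nub g] W V(2) by blast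
      define t where "t = min d 1 / 2"
      have t: "0 < t" "t < d" "t \<le> 1" using d(1) by (auto simp: t_def)
      have "mixm t \<mu> \<nu> \<in> invariant_measures F"
        by (rule mixm_invariant[OF muinv nuinv]) (use t in auto)
      moreover have "full_support (mixm t \<mu> \<nu>)"
        by (rule mixm_full_support[OF mufs mub nub t(1)])
      moreover have "mixm t \<mu> \<nu> \<in> V" using d t by blast
      ultimately show "\<exists>y. y \<in> S \<and> y \<in> W" unfolding S_def V(2) by blast
    qed
  qed
  obtain C :: "nat \<Rightarrow> 'a set" where Cfin: "\<And>n. finite (C n)"
    and Ccov: "\<And>n x. \<exists>c\<in>C n. x \<in> ball c (1 / real (Suc n))"
    using finite_nets[OF assms(1)] by blast
  define Balls where "Balls = (\<Union>n. (\<lambda>c. ball c (1 / real (Suc n))) ` C n)"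
  have cB: "countable Balls" unfolding Balls_def
    by (rule countable_UN) (auto intro!: countable_image countable_finite Cfin)
  define Op where "Op B = {M \<in> borel_prob_measures. emeasure M B > 0} \<inter> invariant_measures F" for B :: "'a set"
  define \<U> where "\<U> = Op ` Balls"
  have cU: "countable \<U>" unfolding \<U>_def using cB by simp
  have oU: "\<U> \<subseteq> Collect (openin T)"
  proof
    fix W assume "W \<in> \<U>"
    then obtain B where B: "B \<in> Balls" "W = Op B" unfolding \<U>_def by blast
    then have "open B" unfolding Balls_def by auto
    then show "W \<in> Collect (openin T)" unfolding B(2) Op_def T_def openin_subtopology
      using open_pos by blast
  qed
  have eqS: "topspace T \<inter> \<Inter>\<U> = S"
  proof (intro equalityI subsetI)
    fix M assume M: "M \<in> S"
    then have Mi: "M \<in> invariant_measures F" and fs: "full_support M" by (auto simp: S_def)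
    have "M \<in> Op B" if "B \<in> Balls" for B
    proof -
      obtain n c where B: "B = ball c (1 / real (Suc n))" using \<open>B \<in> Balls\<close> unfolding Balls_def by blast
      have "open B" "B \<noteq> {}" unfolding B by auto
      then have "emeasure M B > 0" using fs by (auto simp: full_support_def)
      then show ?thesis using Mi invb unfolding Op_def by auto
    qed
    then show "M \<in> topspace T \<inter> \<Inter>\<U>" using Mi tT unfolding \<U>_def by auto
  next
    fix M assume M: "M \<in> topspace T \<inter> \<Inter>\<U>"
    then have Mi: "M \<in> invariant_measures F" using tT by auto
    have allB: "emeasure M B > 0" if "B \<in> Balls" for B
    proof -
      have "Op B \<in> \<U>" using that by (simp add: \<U>_def)
      then have "M \<in> Op B" using M by blast
      then show ?thesis by (simp add: Op_def)
    qed
    have Mb: "M \<in> borel_prob_measures" using Mi invb by blast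
    have "full_support M" unfolding full_support_def
    proof (intro allI impI)
      fix U :: "'a set" assume U: "open U \<and> U \<noteq> {}"
      then obtain x where x: "x \<in> U" by blast
      then obtain r where r: "r > 0" "ball x r \<subseteq> U" using U open_contains_ball by blast
      obtain n where n: "inverse (real (Suc n)) < r / 2" using r(1) reals_Archimedean[of "r/2"] by auto
      obtain c where c: "c \<in> C n" "x \<in> ball c (1 / real (Suc n))" using Ccov by blast
      have sub: "ball c (1 / real (Suc n)) \<subseteq> U"
      proof
        fix y assume "y \<in> ball c (1 / real (Suc n))"
        then have "dist c y < 1 / real (Suc n)" by simp
        moreover have "dist c x < 1 / real (Suc n)" using c(2) by simp
        moreover have "1 / real (Suc n) < r / 2" using n by (simp add: inverse_eq_divide)
        ultimately have "dist x y < r" using dist_triangle[of x y c] dist_commute[of c x]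
          by linarith
        then show "y \<in> U" using r(2) by auto
      qed
      have "ball c (1 / real (Suc n)) \<in> Balls" unfolding Balls_def using c(1) by blast
      then have "0 < emeasure M (ball c (1 / real (Suc n)))" by (rule allB)
      also have "\<dots> \<le> emeasure M U"
        using sub U bpm_facts(1)[OF Mb] by (intro emeasure_mono) auto
      finally show "0 < emeasure M U" .
    qed
    then show "M \<in> S" using Mi unfolding S_def by blast
  qed
  have "gdelta_in T S"
    unfolding gdelta_in_def relative_to_def intersection_of_def
    using cU oU eqS by blast
  then show ?thesis using cl by blast
qed


end
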